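(* Let $q$, $r_1,r_2,r_3$, $m_1$ and the neighborhoods $V_i^l$ be as described in the context, let $H_1,H_2,H_3\subset\mathbb{C}$ be arbitrary open sets, $H:=\bigcup_{i=1}^3H_i$ and $Z^l:=\bigcup_{i=1}^3H_i\times V_i^l$. Let $K$ be a compact subset of $H$. There exist $\delta_0>0$ and $l_0\ge1$ such that for every $l\ge l_0$ and every holomorphic map $g\colon Z^l\to K\times\mathbb{C}$ of the form $g(z,w)=(h(z,w),q^{lm_1}(w))$ which contracts the cone field $C_{\delta_0}$ on $Z^l$, there is $\alpha>0$ with the following property: if $f$ is a holomorphic map on $Z^l$ with $\|f-g\|_{C^1,Z^l}\le\alpha$, $i\in\{1,2,3\}$ and $\sigma\colon V_i^l\to H_i$ is holomorphic with $\sup_{V_i^l}|\sigma'|<\delta_0$, then $\Lambda_f:=\bigcap_{n\ge0}f^{-n}(\overline{Z^l})$ intersects the graph $\Gamma_\sigma:=\{(\sigma(w),w):w\in V_i^l\}$.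
   Context: $q$ is a complex polynomial of degree $d\ge2$; $r_1,r_2,r_3$ are distinct repelling periodic points of $q$ of period $m_1$, with multipliers $\chi_i$, not in the postcritical set of $q$. The $V_i^l$ ($l\ge0$) are connected open neighborhoods of $r_i$ constructed by the paper with the properties: $q^{m_1}$ maps $V_i^{l+1}$ biholomorphically onto $V_i^l$; ${\rm diam}(V_i^l)$ decreases exponentially in $l$; and there exist $A>0$, $l_0'\ge1$ such that for $l\ge l_0'$: $|(q^{lm_1})'|\ge A|\chi_i|^l>1$ on $V_i^l$, $\overline{\bigcup_jV_j^l}\subset q^{lm_1}(V_i^l)$, and $q^{lm_1}$ maps $V_i^l\cap q^{-lm_1}(V_j^l)$ biholomorphically onto $V_j^l$. For $\delta>0$, $C_\delta:=\{(a,b)\in\mathbb{C}^2:|a|<\delta|b|\}$ viewed as a constant cone field on $\mathbb{C}^2$; a map $g$ contracts $C_\delta$ on $U$ if there is $0<\delta'<\delta$ with $D_xg(C_\delta)\subset C_{\delta'}$ for all $x\in U$. *)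

theory Defs
  imports "HOL-Complex_Analysis.Complex_Analysis" "HOL-Computational_Algebra.Polynomial"
begin

definition crit_points :: "complex poly \<Rightarrow> complex set" where
  "crit_points q = {c. poly (pderiv q) c = 0}"

definition postcritical_set :: "complex poly \<Rightarrow> complex set" where
  "postcritical_set q = (\<Union>n\<in>{1..}. (poly q ^^ n) ` crit_points q)"

definition cmul2 :: "complex \<Rightarrow> complex \<times> complex \<Rightarrow> complex \<times> complex" where
  "cmul2 c v = (c * fst v, c * snd v)"

definition holomorphic2_on ::
  "(complex \<times> complex \<Rightarrow> complex \<times> complex) \<Rightarrow> (complex \<times> complex) set \<Rightarrow> bool" where
  "holomorphic2_on f U \<longleftrightarrow>
     (\<forall>x\<in>U. \<exists>D. (f has_derivative D) (at x) \<and> (\<forall>c v. D (cmul2 c v) = cmul2 c (D v)))"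

definition cone :: "real \<Rightarrow> (complex \<times> complex) set" where
  "cone \<delta> = {(a, b). cmod a < \<delta> * cmod b}"

definition contracts_cone ::
  "(complex \<times> complex \<Rightarrow> complex \<times> complex) \<Rightarrow> (complex \<times> complex) set \<Rightarrow> real \<Rightarrow> bool" where
  "contracts_cone g U \<delta> \<longleftrightarrow>
     (\<exists>\<delta>'. 0 < \<delta>' \<and> \<delta>' < \<delta> \<and>
        (\<forall>x\<in>U. \<forall>v\<in>cone \<delta>. frechet_derivative g (at x) v \<in> cone \<delta>'))"

definition C1_close ::
  "(complex \<times> complex) set \<Rightarrow> (complex \<times> complex \<Rightarrow> complex \<times> complex)
     \<Rightarrow> (complex \<times> complex \<Rightarrow> complex \<times> complex) \<Rightarrow> real \<Rightarrow> bool" where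
  "C1_close U f g \<alpha> \<longleftrightarrow>
     (\<forall>x\<in>U. norm (f x - g x) \<le> \<alpha> \<and>
        onorm (\<lambda>v. frechet_derivative f (at x) v - frechet_derivative g (at x) v) \<le> \<alpha>)"

fun iter_preimage ::
  "('a \<Rightarrow> 'a) \<Rightarrow> 'a set \<Rightarrow> nat \<Rightarrow> 'a set \<Rightarrow> 'a set" where
  "iter_preimage f U 0 A = A"
| "iter_preimage f U (Suc n) A = {x \<in> U. f x \<in> iter_preimage f U n A}"

definition Lambda_set ::
  "(complex \<times> complex \<Rightarrow> complex \<times> complex) \<Rightarrow> (complex \<times> complex) set \<Rightarrow> (complex \<times> complex) set" where
  "Lambda_set f Z = (\<Inter>n. iter_preimage f Z n (closure Z))"

end

theory Submission
  imports Defs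
begin


lemma funpow_poly_holo: "(poly q ^^ n) holomorphic_on S"
proof (induction n arbitrary: S)
  case 0 then show ?case by (simp add: holomorphic_on_id id_def)
next
  case (Suc n)
  have "(poly q \<circ> (poly q ^^ n)) holomorphic_on S"
    by (rule holomorphic_on_compose[OF Suc]) (auto intro: holomorphic_intros)
  then show ?case by (simp add: o_def)
qed

lemma bij_iter:
  assumes "\<And>l. bij_betw (poly q ^^ m1) (V (Suc l)) (V l)"
  shows "bij_betw (poly q ^^ (l * m1)) (V l) (V 0)"
proof (induction l)
  case 0 then show ?case by (simp add: bij_betw_def)
next
  case (Suc l)
  have "bij_betw ((poly q ^^ (l * m1)) \<circ> (poly q ^^ m1)) (V (Suc l)) (V 0)"
    by (rule bij_betw_trans[OF assms Suc])
  moreover have "(poly q ^^ (l * m1)) \<circ> (poly q ^^ m1) = poly q ^^ (Suc l * m1)"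
    by (simp add: funpow_add[symmetric] add.commute)
  ultimately show ?case by simp
qed

lemma curve_deriv:
  fixes f :: "complex \<times> complex \<Rightarrow> complex \<times> complex"
  assumes "(f has_derivative Df) (at (a y, b y))"
    and "\<forall>c v. Df (cmul2 c v) = cmul2 c (Df v)"
    and "(a has_field_derivative a') (at y)" and "(b has_field_derivative b') (at y)"
  shows "((\<lambda>y. fst (f (a y, b y))) has_field_derivative fst (Df (a', b'))) (at y)"
    and "((\<lambda>y. snd (f (a y, b y))) has_field_derivative snd (Df (a', b'))) (at y)"
proof -
  have c: "((\<lambda>y. (a y, b y)) has_derivative (\<lambda>h. cmul2 h (a', b'))) (at y)"
    using has_derivative_Pair[OF assms(3)[unfolded has_field_derivative_def] assms(4)[unfolded has_field_derivative_def]]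
    by (simp add: cmul2_def mult.commute)
  have d: "((\<lambda>y. f (a y, b y)) has_derivative (\<lambda>h. cmul2 h (Df (a', b')))) (at y)"
    using has_derivative_compose[OF c assms(1)] assms(2) by (simp add: o_def)
  show "((\<lambda>y. fst (f (a y, b y))) has_field_derivative fst (Df (a', b'))) (at y)"
    unfolding has_field_derivative_def
    using has_derivative_fst[OF d] by (simp add: cmul2_def mult.commute[of _ "fst (Df (a', b'))"])
  show "((\<lambda>y. snd (f (a y, b y))) has_field_derivative snd (Df (a', b'))) (at y)"
    unfolding has_field_derivative_def
    using has_derivative_snd[OF d] by (simp add: cmul2_def mult.commute[of _ "snd (Df (a', b'))"])
qed

lemma snd_deriv:
  fixes g :: "complex \<times> complex \<Rightarrow> complex \<times> complex"
  assumes "open Z" "x \<in> Z" "(g has_derivative Dg) (at x)"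
    and "\<And>z. z \<in> Z \<Longrightarrow> snd (g z) = Q (snd z)"
    and "(Q has_field_derivative Q') (at (snd x))"
  shows "snd (Dg w) = Q' * snd w"
proof -
  have 1: "((\<lambda>z. snd (g z)) has_derivative (\<lambda>w. snd (Dg w))) (at x)"
    using has_derivative_snd[OF assms(3)] .
  have 2: "((\<lambda>z. Q (snd z)) has_derivative (\<lambda>w. Q' * snd w)) (at x)"
    using has_derivative_compose[OF has_derivative_snd[OF has_derivative_ident] assms(5)[unfolded has_field_derivative_def]]
    by (simp add: o_def)
  have 3: "((\<lambda>z. snd (g z)) has_derivative (\<lambda>w. Q' * snd w)) (at x)"
    by (rule has_derivative_transform_within_open[OF 2 assms(1,2)]) (simp add: assms(4))
  have "(\<lambda>w. snd (Dg w)) = (\<lambda>w. Q' * snd w)"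
    by (rule has_derivative_unique[OF 1 3])
  then show ?thesis by metis
qed



lemma path_bound:
  fixes S :: "complex set"
  assumes "open S" "connected S" "a \<in> S" "b \<in> S"
  shows "\<exists>L\<ge>0. \<forall>A M. A holomorphic_on S \<longrightarrow> (\<forall>z\<in>S. norm (deriv A z) \<le> M)
            \<longrightarrow> norm (A b - A a) \<le> M * L"
proof -
  obtain \<gamma> where \<gamma>: "polynomial_function \<gamma>" "path_image \<gamma> \<subseteq> S" "pathstart \<gamma> = a" "pathfinish \<gamma> = b"
    using connected_open_polynomial_connected[OF assms] by blast
  obtain \<gamma>' where \<gamma>': "polynomial_function \<gamma>'" "\<And>x. (\<gamma> has_vector_derivative (\<gamma>' x)) (at x)"
    using has_vector_derivative_polynomial_function[OF \<gamma>(1)] by blast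
  have "compact (\<gamma>' ` {0..1})"
    by (rule compact_continuous_image[OF continuous_on_polymonial_function[OF \<gamma>'(1)]]) simp
  then obtain B0 where B0: "\<And>t. t \<in> {0..1} \<Longrightarrow> norm (\<gamma>' t) \<le> B0"
    using compact_imp_bounded bounded_iff by (metis image_eqI)
  define B where "B = max B0 0"
  have B: "\<And>t. t \<in> {0..1} \<Longrightarrow> norm (\<gamma>' t) \<le> B" "B \<ge> 0"
    using B0 by (auto simp: B_def intro: max.coboundedI1)
  have gS: "\<And>t. t \<in> {0..1} \<Longrightarrow> \<gamma> t \<in> S"
    using \<gamma>(2) by (auto simp: path_image_def)
  show ?thesis
  proof (intro exI[of _ B] conjI allI impI)
    show "B \<ge> 0" by (rule B(2))
    fix A M
    assume hA: "A holomorphic_on S" and hM: "\<forall>z\<in>S. norm (deriv A z) \<le> M"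
    have d: "((A \<circ> \<gamma>) has_derivative (\<lambda>h. h *\<^sub>R (\<gamma>' t * deriv A (\<gamma> t)))) (at t within {0..1})"
      if "t \<in> {0..1}" for t
    proof -
      have "(A has_field_derivative deriv A (\<gamma> t)) (at (\<gamma> t))"
        using holomorphic_derivI[OF hA assms(1) gS[OF that]] .
      from field_vector_diff_chain_at[OF \<gamma>'(2) this]
      show ?thesis unfolding has_vector_derivative_def
        by (rule has_derivative_at_withinI)
    qed
    have on: "onorm (\<lambda>h::real. h *\<^sub>R (\<gamma>' t * deriv A (\<gamma> t))) \<le> B * M" if "t \<in> {0..1}" for t
    proof -
      have "onorm (\<lambda>h::real. h *\<^sub>R (\<gamma>' t * deriv A (\<gamma> t))) = norm (\<gamma>' t * deriv A (\<gamma> t))"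
        using onorm_scaleR_left[OF bounded_linear_ident, of "\<gamma>' t * deriv A (\<gamma> t)"]
        by (simp add: onorm_id)
      also have "\<dots> \<le> B * M"
        unfolding norm_mult
        by (rule mult_mono) (use B that hM gS in auto)
      finally show ?thesis .
    qed
    have "norm ((A \<circ> \<gamma>) 1 - (A \<circ> \<gamma>) 0) \<le> (B * M) * norm (1 - (0::real))"
      by (rule differentiable_bound[OF convex_real_interval(5) d on]) auto
    then show "norm (A b - A a) \<le> M * B"
      using \<gamma>(3,4) by (simp add: pathstart_def pathfinish_def mult.commute)
  qed
qed

lemma inverse_near_id:
  fixes \<phi> :: "complex \<Rightarrow> complex"
  assumes holo: "\<phi> holomorphic_on ball c (2*R)"
    and der: "\<And>y. y \<in> ball c (2*R) \<Longrightarrow> norm (deriv \<phi> y - 1) \<le> 1/2"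
    and close: "\<And>y. y \<in> ball c (2*R) \<Longrightarrow> norm (\<phi> y - y) \<le> \<alpha>"
    and "0 \<le> \<alpha>" "\<alpha> < R"
  shows "inj_on \<phi> (ball c (2*R))"
    and "\<And>t. t \<in> cball c R \<Longrightarrow> \<exists>y\<in>cball t \<alpha>. \<phi> y = t"
proof -
  define \<rho> where "\<rho> y = \<phi> y - y" for y
  have drho: "(\<rho> has_field_derivative (deriv \<phi> y - 1)) (at y within ball c (2*R))"
    if "y \<in> ball c (2*R)" for y
  proof -
    have "(\<phi> has_field_derivative deriv \<phi> y) (at y)"
      using holomorphic_derivI[OF holo open_ball that] .
    then have "(\<rho> has_field_derivative (deriv \<phi> y - 1)) (at y)"
      unfolding \<rho>_def[abs_def] by (auto intro!: derivative_eq_intros)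
    then show ?thesis by (rule has_field_derivative_at_within)
  qed
  have lip: "norm (\<rho> x - \<rho> y) \<le> 1/2 * norm (x - y)" if "x \<in> ball c (2*R)" "y \<in> ball c (2*R)" for x y
    by (rule field_differentiable_bound[OF convex_ball drho der that])
  show "inj_on \<phi> (ball c (2*R))"
  proof (rule inj_onI)
    fix x y assume xy: "x \<in> ball c (2*R)" "y \<in> ball c (2*R)" "\<phi> x = \<phi> y"
    have "\<rho> x - \<rho> y = -(x - y)" using xy(3) by (simp add: \<rho>_def)
    then have "norm (x - y) \<le> 1/2 * norm (x - y)" using lip[OF xy(1,2)] by (simp add: norm_minus_commute)
    then show "x = y" by simp
  qed
  fix t assume t: "t \<in> cball c R"
  have sub: "cball t \<alpha> \<subseteq> ball c (2*R)"
  proof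
    fix y assume "y \<in> cball t \<alpha>"
    then have "dist c y \<le> dist c t + dist t y" "dist t y \<le> \<alpha>" "dist c t \<le> R" using t dist_triangle
      by (auto simp: mem_cball)
    then show "y \<in> ball c (2*R)" using assms(5) by (simp add: mem_ball)
  qed
  define T where "T y = t - \<rho> y" for y
  have "\<exists>!y\<in>cball t \<alpha>. T y = y"
  proof (rule Banach_fix)
    show "complete (cball t \<alpha>)" by (simp add: complete_eq_closed)
    show "cball t \<alpha> \<noteq> {}" using assms(4) by simp
    show "(0::real) \<le> 1/2" "(1/2::real) < 1" by auto
    show "T ` cball t \<alpha> \<subseteq> cball t \<alpha>"
    proof
      fix z assume "z \<in> T ` cball t \<alpha>"
      then obtain y where y: "y \<in> cball t \<alpha>" "z = T y" by auto
      have "norm (\<rho> y) \<le> \<alpha>" using close sub y(1) by (auto simp: \<rho>_def)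
      then show "z \<in> cball t \<alpha>" using y by (simp add: T_def dist_norm mem_cball)
    qed
    show "dist (T x) (T y) \<le> 1/2 * dist x y" if "x \<in> cball t \<alpha>" "y \<in> cball t \<alpha>" for x y
    proof -
      have xb: "x \<in> ball c (2*R)" "y \<in> ball c (2*R)" using sub that by auto
      have "dist (T x) (T y) = norm (\<rho> x - \<rho> y)"
        by (simp add: T_def dist_norm norm_minus_commute)
      with lip[OF xb] show ?thesis by (simp add: dist_norm)
    qed
  qed
  then obtain y where "y \<in> cball t \<alpha>" "T y = y" by auto
  then show "\<exists>y\<in>cball t \<alpha>. \<phi> y = t"
    by (intro bexI[of _ y]) (auto simp: T_def \<rho>_def)
qed

lemma iter_pre_mem:
  assumes "\<And>t. (f ^^ t) x \<in> U" "U \<subseteq> A"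
  shows "x \<in> iter_preimage f U n A"
  using assms(1)
proof (induction n arbitrary: x)
  case 0 then show ?case using assms(2) by (metis funpow_0 iter_preimage.simps(1) subsetD)
next
  case (Suc n)
  have "(f ^^ t) (f x) \<in> U" for t using Suc.prems[of "Suc t"] by (simp add: funpow_Suc_right del: funpow.simps)
  then have "f x \<in> iter_preimage f U n A" by (rule Suc.IH)
  moreover have "x \<in> U" using Suc.prems[of 0] by simp
  ultimately show ?case by simp
qed



lemma pair_norm_fst: "norm (fst z) \<le> norm z" and pair_norm_snd: "norm (snd z) \<le> norm z"
  using norm_fst_le[of "fst z" "snd z"] norm_snd_le[of "snd z" "fst z"] by auto

lemma step:
  fixes f g :: "complex \<times> complex \<Rightarrow> complex \<times> complex" and Q \<psi> s :: "complex \<Rightarrow> complex"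
    and Hs Vs :: "nat \<Rightarrow> complex set" and VO K :: "complex set" and Z :: "(complex \<times> complex) set" and r :: "nat \<Rightarrow> complex"
  assumes Zo: "open Z" and opens: "open (Vs k)" "open VO" and Vso: "\<forall>j\<in>{1..3}. open (Vs j)"
    and psi: "\<psi> holomorphic_on VO" "\<psi> ` VO \<subseteq> Vs k" "\<forall>y\<in>VO. Q (\<psi> y) = y"
      "\<forall>y\<in>VO. deriv Q (\<psi> y) * deriv \<psi> y = 1"
    and Qd: "\<forall>u\<in>Vs k. norm (deriv Q u) \<ge> 1" "\<forall>u. (Q has_field_derivative deriv Q u) (at u)"
    and s: "s holomorphic_on Vs k" "s ` Vs k \<subseteq> Hs k" "\<forall>u\<in>Vs k. norm (deriv s u) < \<delta>o"
    and sub: "Hs k \<times> Vs k \<subseteq> Z"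
    and fh: "holomorphic2_on f Z" and gh: "holomorphic2_on g Z"
    and gprop: "\<forall>x\<in>Z. fst (g x) \<in> K \<and> snd (g x) = Q (snd x)"
    and cone: "\<forall>x\<in>Z. \<forall>v\<in>cone \<delta>o. frechet_derivative g (at x) v \<in> cone \<delta>'"
    and close: "C1_close Z f g \<alpha>"
    and balls: "\<forall>j\<in>{1..3}. cball (r j) (2*R) \<subseteq> VO"
    and Lp: "\<forall>A M. A holomorphic_on VO \<longrightarrow> (\<forall>z\<in>VO. norm (deriv A z) \<le> M)
               \<longrightarrow> (\<forall>j\<in>{1..3}. norm (A (r j) - A (r 1)) \<le> M * LO)"
    and leb: "\<forall>p\<in>K. \<exists>j\<in>{1..3}. ball p e \<subseteq> Hs j"
    and Vsmall: "\<forall>j\<in>{1..3}. Vs j \<subseteq> ball (r j) R"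
    and num: "0 < \<delta>'" "\<delta>' < \<delta>o" "\<delta>o \<le> 1" "0 < \<alpha>" "\<alpha> \<le> 1/4" "8*\<alpha> \<le> \<delta>o - \<delta>'" "\<alpha> < R"
      "\<delta>o * (2*R + LO) + \<alpha> < e"
  shows "\<exists>j\<in>{1..3}. \<exists>s'. s' holomorphic_on Vs j \<and> s' ` Vs j \<subseteq> Hs j
           \<and> (\<forall>u\<in>Vs j. norm (deriv s' u) < \<delta>o)
           \<and> (\<forall>u'\<in>Vs j. \<exists>u\<in>\<psi> ` cball (r j) (R+\<alpha>). f (s u, u) = (s' u', u'))"
proof -
  define X where "X y = (s (\<psi> y), \<psi> y)" for y
  define A where "A y = fst (f (s (\<psi> y), \<psi> y))" for y
  define \<phi> where "\<phi> y = snd (f (s (\<psi> y), \<psi> y))" for y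
  define Df where "Df y = frechet_derivative f (at (X y))" for y
  define Dg where "Dg y = frechet_derivative g (at (X y))" for y
  define v where "v y = (deriv s (\<psi> y) * deriv \<psi> y, deriv \<psi> y)" for y
  have psiV: "\<psi> y \<in> Vs k" if "y \<in> VO" for y using psi(2) that by auto
  have XZ: "X y \<in> Z" if "y \<in> VO" for y
    using sub s(2) psiV[OF that] by (auto simp: X_def)
  have fD: "(f has_derivative Df y) (at (X y)) \<and> (\<forall>c w. Df y (cmul2 c w) = cmul2 c (Df y w))"
    if yVO: "y \<in> VO" for y
  proof -
    obtain D where D: "(f has_derivative D) (at (X y))" "\<forall>c w. D (cmul2 c w) = cmul2 c (D w)"
      using fh XZ[OF yVO] unfolding holomorphic2_on_def by blast
    then show ?thesis using frechet_derivative_at[OF D(1)] by (simp add: Df_def)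
  qed
  have gD: "(g has_derivative Dg y) (at (X y))" if yVO: "y \<in> VO" for y
  proof -
    obtain D where D: "(g has_derivative D) (at (X y))"
      using gh XZ[OF yVO] unfolding holomorphic2_on_def by blast
    then show ?thesis using frechet_derivative_at[OF D(1)] by (simp add: Dg_def)
  qed
  have dpsi: "(\<psi> has_field_derivative deriv \<psi> y) (at y)" if "y \<in> VO" for y
    using holomorphic_derivI[OF psi(1) opens(2) that] .
  have dspsi: "((\<lambda>y. s (\<psi> y)) has_field_derivative (deriv s (\<psi> y) * deriv \<psi> y)) (at y)"
    if "y \<in> VO" for y
    using DERIV_chain2[OF holomorphic_derivI[OF s(1) opens(1) psiV[OF that]] dpsi[OF that]] .
  have dA: "(A has_field_derivative fst (Df y (v y))) (at y)"
    and d\<phi>: "(\<phi> has_field_derivative snd (Df y (v y))) (at y)" if "y \<in> VO" for y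
    using curve_deriv[where f=f and Df="Df y" and a="\<lambda>y. s (\<psi> y)" and b=\<psi> and y=y, OF _ _ dspsi[OF that] dpsi[OF that]]
      fD[OF that] unfolding A_def[abs_def] \<phi>_def[abs_def] v_def X_def by auto
  have Aholo: "A holomorphic_on VO" and \<phi>holo: "\<phi> holomorphic_on VO"
    using dA d\<phi> opens(2) by (auto simp: holomorphic_on_open)
  have derA: "deriv A y = fst (Df y (v y))" and der\<phi>: "deriv \<phi> y = snd (Df y (v y))"
    if "y \<in> VO" for y
    using DERIV_imp_deriv[OF dA[OF that]] DERIV_imp_deriv[OF d\<phi>[OF that]] by auto
  have psider: "deriv \<psi> y \<noteq> 0 \<and> norm (deriv \<psi> y) \<le> 1" if "y \<in> VO" for y
  proof -
    have e1: "deriv Q (\<psi> y) * deriv \<psi> y = 1" using psi(4) that by auto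
    have n1: "norm (deriv Q (\<psi> y)) \<ge> 1" using Qd(1) psiV[OF that] by auto
    have "norm (deriv Q (\<psi> y)) * norm (deriv \<psi> y) = 1" using e1 by (metis norm_mult norm_one)
    moreover have "1 * norm (deriv \<psi> y) \<le> norm (deriv Q (\<psi> y)) * norm (deriv \<psi> y)"
      by (rule mult_right_mono[OF n1 norm_ge_zero])
    ultimately have "norm (deriv \<psi> y) \<le> 1" by simp
    moreover have "deriv \<psi> y \<noteq> 0" using e1 by auto
    ultimately show ?thesis by auto
  qed
  have vcone: "v y \<in> cone \<delta>o" if "y \<in> VO" for y
  proof -
    have "norm (deriv s (\<psi> y)) < \<delta>o" using s(3) psiV[OF that] by auto
    moreover have "norm (deriv \<psi> y) > 0" using psider[OF that] by auto
    ultimately have "norm (deriv s (\<psi> y)) * norm (deriv \<psi> y) < \<delta>o * norm (deriv \<psi> y)"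
      by (rule mult_strict_right_mono)
    then show ?thesis by (simp add: v_def cone_def norm_mult)
  qed
  have vnorm: "norm (v y) \<le> 2" if "y \<in> VO" for y
  proof -
    have "norm (v y) \<le> norm (deriv s (\<psi> y) * deriv \<psi> y) + norm (deriv \<psi> y)"
      unfolding v_def by (rule norm_Pair_le)
    also have "\<dots> = norm (deriv s (\<psi> y)) * norm (deriv \<psi> y) + norm (deriv \<psi> y)"
      by (simp add: norm_mult)
    also have "\<dots> \<le> 1 * 1 + 1"
      using s(3) psiV[OF that] psider[OF that] num(3)
      by (intro add_mono mult_mono) auto
    finally show ?thesis by simp
  qed
  have Dgsnd: "snd (Dg y (v y)) = 1" if "y \<in> VO" for y
  proof -
    have "snd (Dg y (v y)) = deriv Q (snd (X y)) * snd (v y)"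
      by (rule snd_deriv[OF Zo XZ[OF that] gD[OF that]]) (use gprop Qd(2) in auto)
    then show ?thesis using psi(4) that by (simp add: X_def v_def)
  qed
  have Dgfst: "norm (fst (Dg y (v y))) < \<delta>'" if "y \<in> VO" for y
  proof -
    have "Dg y (v y) \<in> cone \<delta>'" using cone XZ[OF that] vcone[OF that] unfolding Dg_def by blast
    then have "norm (fst (Dg y (v y))) < \<delta>' * norm (snd (Dg y (v y)))"
      by (cases "Dg y (v y)") (simp add: cone_def)
    then show ?thesis using Dgsnd[OF that] by simp
  qed
  have diff: "norm (Df y (v y) - Dg y (v y)) \<le> 2 * \<alpha>" if "y \<in> VO" for y
  proof -
    have bl: "bounded_linear (\<lambda>w. Df y w - Dg y w)"
      using has_derivative_bounded_linear fD[OF that] gD[OF that]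
      by (blast intro: bounded_linear_sub)
    have "norm (Df y (v y) - Dg y (v y)) \<le> onorm (\<lambda>w. Df y w - Dg y w) * norm (v y)"
      using onorm[OF bl] by simp
    also have "\<dots> \<le> \<alpha> * 2"
      using close XZ[OF that] vnorm[OF that] num(4)
      by (intro mult_mono) (auto simp: C1_close_def Df_def Dg_def onorm_pos_le[OF bl])
    finally show ?thesis by simp
  qed
  have Ader: "norm (deriv A y) \<le> \<delta>' + 2*\<alpha>" if "y \<in> VO" for y
  proof -
    have "deriv A y = fst (Dg y (v y)) + fst (Df y (v y) - Dg y (v y))" using derA[OF that] by simp
    then have "norm (deriv A y) \<le> norm (fst (Dg y (v y))) + norm (fst (Df y (v y) - Dg y (v y)))"
      by (metis norm_triangle_ineq)
    then show ?thesis using Dgfst[OF that] diff[OF that] pair_norm_fst[of "Df y (v y) - Dg y (v y)"]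
      by linarith
  qed
  have \<phi>der: "norm (deriv \<phi> y - 1) \<le> 2*\<alpha>" if "y \<in> VO" for y
  proof -
    have "deriv \<phi> y - 1 = snd (Df y (v y) - Dg y (v y))" using der\<phi>[OF that] Dgsnd[OF that] by simp
    then show ?thesis using diff[OF that] pair_norm_snd[of "Df y (v y) - Dg y (v y)"] by simp
  qed
  have fgclose: "norm (f (X y) - g (X y)) \<le> \<alpha>" if "y \<in> VO" for y
    using close XZ[OF that] by (auto simp: C1_close_def)
  have \<phi>close: "norm (\<phi> y - y) \<le> \<alpha>" if "y \<in> VO" for y
  proof -
    have "snd (g (X y)) = y" using gprop XZ[OF that] psi(3) that by (auto simp: X_def)
    then have "\<phi> y - y = snd (f (X y) - g (X y))" by (simp add: \<phi>_def X_def)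
    then show ?thesis using fgclose[OF that] pair_norm_snd[of "f (X y) - g (X y)"] by simp
  qed
  have Aclose: "norm (A y - fst (g (X y))) \<le> \<alpha>" if "y \<in> VO" for y
  proof -
    have "A y - fst (g (X y)) = fst (f (X y) - g (X y))" by (simp add: A_def X_def)
    then show ?thesis using fgclose[OF that] pair_norm_fst[of "f (X y) - g (X y)"] by simp
  qed
  have r1: "r 1 \<in> VO"
  proof -
    have "cball (r 1) (2*R) \<subseteq> VO" using balls by simp
    moreover have "r 1 \<in> cball (r 1) (2*R)" using num(4,7) by simp
    ultimately show ?thesis by blast
  qed
  define p where "p = fst (g (X (r 1)))"
  have pK: "p \<in> K" using gprop XZ[OF r1] by (auto simp: p_def)
  obtain j where j: "j \<in> {1..3}" "ball p e \<subseteq> Hs j" using leb pK by blast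
  define S where "S = ball (r j) (2*R)"
  have SV: "S \<subseteq> VO"
  proof -
    have "cball (r j) (2*R) \<subseteq> VO" using balls j(1) by blast
    then show ?thesis unfolding S_def using ball_subset_cball by blast
  qed
  have Ad0: "norm (deriv A y) \<le> \<delta>o" if "y \<in> VO" for y
    using Ader[OF that] num by linarith
  have AHj: "A y \<in> Hs j" if "y \<in> S" for y
  proof -
    have rjS: "r j \<in> S" using num(4,7) by (simp add: S_def)
    have "norm (A y - A (r j)) \<le> \<delta>o * norm (y - r j)"
    proof (rule field_differentiable_bound[of S])
      show "convex S" by (simp add: S_def)
      show "(A has_field_derivative deriv A z) (at z within S)" if "z \<in> S" for z
        using DERIV_imp_deriv[OF dA] dA SV that by (metis has_field_derivative_at_within subsetD)
      show "norm (deriv A z) \<le> \<delta>o" if "z \<in> S" for z using Ad0 SV that by auto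
    qed (use that rjS in auto)
    also have "\<dots> \<le> \<delta>o * (2*R)"
      using that num(1,2) by (intro mult_left_mono) (auto simp: S_def dist_norm norm_minus_commute)
    finally have 1: "norm (A y - A (r j)) \<le> \<delta>o * (2*R)" .
    have 2: "norm (A (r j) - A (r 1)) \<le> \<delta>o * LO"
      using Lp Aholo Ad0 j(1) by blast
    have 3: "norm (A (r 1) - p) \<le> \<alpha>" using Aclose[OF r1] by (simp add: p_def)
    have eqs: "A y - p = ((A y - A (r j)) + (A (r j) - A (r 1))) + (A (r 1) - p)" by simp
    have t1: "norm (((A y - A (r j)) + (A (r j) - A (r 1))) + (A (r 1) - p))
       \<le> norm ((A y - A (r j)) + (A (r j) - A (r 1))) + norm (A (r 1) - p)"
      by (rule norm_triangle_ineq)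
    have t2: "norm ((A y - A (r j)) + (A (r j) - A (r 1))) \<le> norm (A y - A (r j)) + norm (A (r j) - A (r 1))"
      by (rule norm_triangle_ineq)
    have "norm (A y - p) \<le> norm (A y - A (r j)) + norm (A (r j) - A (r 1)) + norm (A (r 1) - p)"
      by (subst eqs) (use t1 t2 in linarith)
    also have "\<dots> < e" using 1 2 3 num(8) by (simp add: algebra_simps)
    finally have "A y \<in> ball p e" by (simp add: dist_norm norm_minus_commute)
    then show ?thesis using j(2) by auto
  qed
  have \<phi>S: "\<phi> holomorphic_on S" using \<phi>holo SV by (rule holomorphic_on_subset)
  have inv: "inj_on \<phi> S" "\<And>t. t \<in> cball (r j) R \<Longrightarrow> \<exists>y\<in>cball t \<alpha>. \<phi> y = t"
  proof -
    have h1: "norm (deriv \<phi> y - 1) \<le> 1/2" if "y \<in> ball (r j) (2*R)" for y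
      using \<phi>der[of y] SV that num(5) unfolding S_def by force
    have h2: "norm (\<phi> y - y) \<le> \<alpha>" if "y \<in> ball (r j) (2*R)" for y
      using \<phi>close[of y] SV that unfolding S_def by force
    have h0: "0 \<le> \<alpha>" using num(4) by simp
    show "inj_on \<phi> S" "\<And>t. t \<in> cball (r j) R \<Longrightarrow> \<exists>y\<in>cball t \<alpha>. \<phi> y = t"
      using inverse_near_id[OF \<phi>S[unfolded S_def] h1 h2 h0 num(7)] unfolding S_def by auto
  qed
  obtain \<omega> where \<omega>: "\<omega> holomorphic_on (\<phi> ` S)" "\<And>z. z \<in> S \<Longrightarrow> deriv \<phi> z * deriv \<omega> (\<phi> z) = 1"
    "\<And>z. z \<in> S \<Longrightarrow> \<omega> (\<phi> z) = z"
    using holomorphic_has_inverse[OF \<phi>S _ inv(1)] by (auto simp: S_def)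
  have Vjb: "Vs j \<subseteq> ball (r j) R" using Vsmall j(1) by blast
  have pre: "\<exists>y\<in>S. y \<in> cball t \<alpha> \<and> \<phi> y = t \<and> \<omega> t = y" if "t \<in> Vs j" for t
  proof -
    have tb: "t \<in> cball (r j) R" using Vjb that by auto
    obtain y where y: "y \<in> cball t \<alpha>" "\<phi> y = t" using inv(2)[OF tb] by blast
    have "dist (r j) y \<le> dist (r j) t + dist t y" by (rule dist_triangle)
    then have "y \<in> S" using y(1) tb num(7) by (auto simp: S_def mem_cball)
    then show ?thesis using y \<omega>(3) by force
  qed
  have VjS: "Vs j \<subseteq> \<phi> ` S" using pre by force
  define s' where "s' t = A (\<omega> t)" for t
  have \<omega>Vj: "\<omega> holomorphic_on Vs j" using \<omega>(1) VjS by (rule holomorphic_on_subset)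
  have \<omega>img: "\<omega> ` Vs j \<subseteq> VO" using pre SV by force
  have Vjo: "open (Vs j)" using Vso j(1) by auto
  show ?thesis
  proof (intro bexI[OF _ j(1)] exI[of _ s'] conjI)
    show "s' holomorphic_on Vs j"
      using holomorphic_on_compose_gen[OF \<omega>Vj Aholo \<omega>img] by (simp add: s'_def[abs_def] o_def)
    show "s' ` Vs j \<subseteq> Hs j"
      using pre AHj by (force simp: s'_def)
    show "\<forall>u\<in>Vs j. norm (deriv s' u) < \<delta>o"
    proof
      fix t assume t: "t \<in> Vs j"
      obtain y where y: "y \<in> S" "\<phi> y = t" "\<omega> t = y" using pre[OF t] by blast
      have yV: "y \<in> VO" using SV y(1) by auto
      have "(s' has_field_derivative deriv A y * deriv \<omega> t) (at t)"
        unfolding s'_def[abs_def]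
        using DERIV_chain2[OF _ holomorphic_derivI[OF \<omega>Vj Vjo t]] dA[OF yV] derA[OF yV] y(3)
        by simp
      then have ds: "deriv s' t = deriv A y * deriv \<omega> t" by (rule DERIV_imp_deriv)
      have inv1: "deriv \<phi> y * deriv \<omega> t = 1" using \<omega>(2)[OF y(1)] y(2) by simp
      have dphi: "norm (deriv \<phi> y) \<ge> 1 - 2*\<alpha>"
        using \<phi>der[OF yV] norm_triangle_ineq2[of 1 "deriv \<phi> y"] by (simp add: norm_minus_commute) 
      have "norm (deriv s' t) * norm (deriv \<phi> y) = norm (deriv A y)"
        using ds inv1 by (metis mult.assoc mult.commute mult.right_neutral norm_mult)
      also have "\<dots> \<le> \<delta>' + 2*\<alpha>" by (rule Ader[OF yV])
      also have "\<dots> < \<delta>o * (1 - 2*\<alpha>)"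
      proof -
        have "\<alpha> * \<delta>o \<le> \<alpha>" using num by (intro mult_left_le) auto
        moreover have "\<delta>o * (1 - 2*\<alpha>) = \<delta>o - 2 * (\<alpha> * \<delta>o)" by (simp add: algebra_simps)
        ultimately show ?thesis using num by linarith
      qed
      also have "\<dots> \<le> \<delta>o * norm (deriv \<phi> y)" using dphi num by (intro mult_left_mono) auto
      finally have "norm (deriv s' t) * norm (deriv \<phi> y) < \<delta>o * norm (deriv \<phi> y)" .
      then show "norm (deriv s' t) < \<delta>o"
        using dphi num by (metis mult_less_cancel_right norm_ge_zero not_le)
    qed
    show "\<forall>u'\<in>Vs j. \<exists>u\<in>\<psi> ` cball (r j) (R + \<alpha>). f (s u, u) = (s' u', u')"
    proof
      fix t assume t: "t \<in> Vs j"
      obtain y where y: "y \<in> S" "y \<in> cball t \<alpha>" "\<phi> y = t" "\<omega> t = y" using pre[OF t] by blast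
      have tb: "dist (r j) t < R" using Vjb t by auto
      have "dist (r j) y \<le> dist (r j) t + dist t y" by (rule dist_triangle)
      then have yc: "y \<in> cball (r j) (R + \<alpha>)" using tb y(2) by (auto simp: mem_cball)
      have "f (s (\<psi> y), \<psi> y) = (A y, \<phi> y)" by (simp add: A_def \<phi>_def)
      then have "f (s (\<psi> y), \<psi> y) = (s' t, t)" using y by (simp add: s'_def)
      then show "\<exists>u\<in>\<psi> ` cball (r j) (R + \<alpha>). f (s u, u) = (s' t, t)"
        using yc by blast
    qed
  qed
qed



theorem proposition3p3:
  fixes q :: "complex poly" and r :: "nat \<Rightarrow> complex" and m1 :: nat
    and V :: "nat \<Rightarrow> nat \<Rightarrow> complex set" and H :: "nat \<Rightarrow> complex set"
    and K :: "complex set"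
  assumes deg: "degree q \<ge> 2"
    and m1_pos: "m1 \<ge> 1"
    and r_distinct: "r 1 \<noteq> r 2" "r 1 \<noteq> r 3" "r 2 \<noteq> r 3"
    and r_periodic: "\<And>i. i \<in> {1..3} \<Longrightarrow> (poly q ^^ m1) (r i) = r i"
    and r_repelling: "\<And>i. i \<in> {1..3} \<Longrightarrow> cmod (deriv (poly q ^^ m1) (r i)) > 1"
    and r_not_postcrit: "\<And>i. i \<in> {1..3} \<Longrightarrow> r i \<notin> postcritical_set q"
    and V_open: "\<And>i l. i \<in> {1..3} \<Longrightarrow> open (V i l)"
    and V_connected: "\<And>i l. i \<in> {1..3} \<Longrightarrow> connected (V i l)"
    and V_bounded: "\<And>i l. i \<in> {1..3} \<Longrightarrow> bounded (V i l)"
    and V_center: "\<And>i l. i \<in> {1..3} \<Longrightarrow> r i \<in> V i l"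
    and V_pullback: "\<And>i l. i \<in> {1..3} \<Longrightarrow>
          bij_betw (poly q ^^ m1) (V i (Suc l)) (V i l)"
    and V_diam: "\<exists>C \<theta>. 0 < \<theta> \<and> \<theta> < 1 \<and>
          (\<forall>i\<in>{1..3}. \<forall>l. diameter (V i l) \<le> C * \<theta> ^ l)"
    and V_expanding: "\<exists>A l0'. A > 0 \<and> l0' \<ge> 1 \<and> (\<forall>l\<ge>l0'. \<forall>i\<in>{1..3}.
          (\<forall>w\<in>V i l. A * cmod (deriv (poly q ^^ m1) (r i)) ^ l
                        \<le> cmod (deriv (poly q ^^ (l * m1)) w)) \<and>
          A * cmod (deriv (poly q ^^ m1) (r i)) ^ l > 1 \<and>
          closure (\<Union>j\<in>{1..3}. V j l) \<subseteq> (poly q ^^ (l * m1)) ` V i l \<and>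
          (\<forall>j\<in>{1..3}. bij_betw (poly q ^^ (l * m1))
                         (V i l \<inter> (poly q ^^ (l * m1)) -` V j l) (V j l)))"
    and H_open: "\<And>i. i \<in> {1..3} \<Longrightarrow> open (H i)"
    and K_compact: "compact K"
    and K_sub: "K \<subseteq> (\<Union>i\<in>{1..3}. H i)"
  shows "\<exists>\<delta>0 > 0. \<exists>l0 \<ge> 1. \<forall>l \<ge> l0.
     \<forall>g :: complex \<times> complex \<Rightarrow> complex \<times> complex.
       holomorphic2_on g (\<Union>i\<in>{1..3}. H i \<times> V i l)
       \<and> (\<forall>x\<in>(\<Union>i\<in>{1..3}. H i \<times> V i l). fst (g x) \<in> K
                \<and> snd (g x) = (poly q ^^ (l * m1)) (snd x))
       \<and> contracts_cone g (\<Union>i\<in>{1..3}. H i \<times> V i l) \<delta>0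
       \<longrightarrow> (\<exists>\<alpha> > 0. \<forall>f :: complex \<times> complex \<Rightarrow> complex \<times> complex.
              \<forall>i\<in>{1..3}. \<forall>\<sigma> :: complex \<Rightarrow> complex.
                holomorphic2_on f (\<Union>i\<in>{1..3}. H i \<times> V i l)
                \<and> C1_close (\<Union>i\<in>{1..3}. H i \<times> V i l) f g \<alpha>
                \<and> \<sigma> holomorphic_on V i l \<and> \<sigma> ` V i l \<subseteq> H i
                \<and> (\<exists>c < \<delta>0. \<forall>w\<in>V i l. cmod (deriv \<sigma> w) \<le> c)
                \<longrightarrow> Lambda_set f (\<Union>i\<in>{1..3}. H i \<times> V i l)
                      \<inter> {(\<sigma> w, w) | w. w \<in> V i l} \<noteq> {})"
proof -
  obtain Aexp l0' where Ve: "Aexp > 0" "l0' \<ge> 1" "\<forall>l\<ge>l0'. \<forall>i\<in>{1..3}.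
          (\<forall>w\<in>V i l. Aexp * cmod (deriv (poly q ^^ m1) (r i)) ^ l
                        \<le> cmod (deriv (poly q ^^ (l * m1)) w)) \<and>
          Aexp * cmod (deriv (poly q ^^ m1) (r i)) ^ l > 1 \<and>
          closure (\<Union>j\<in>{1..3}. V j l) \<subseteq> (poly q ^^ (l * m1)) ` V i l \<and>
          (\<forall>j\<in>{1..3}. bij_betw (poly q ^^ (l * m1))
                         (V i l \<inter> (poly q ^^ (l * m1)) -` V j l) (V j l))"
    using V_expanding by blast
  obtain C \<theta> where Vd: "0 < \<theta>" "\<theta> < 1" "\<forall>i\<in>{1..3}. \<forall>l. diameter (V i l) \<le> C * \<theta> ^ l"
    using V_diam by blast
  have bijl: "bij_betw (poly q ^^ (l * m1)) (V k l) (V k 0)" if "k \<in> {1..3}" for k l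
    by (rule bij_iter, rule V_pullback[OF that])
  have rin: "r j \<in> V k 0" if "j \<in> {1..3}" "k \<in> {1..3}" for j k
  proof -
    have c1: "r j \<in> closure (\<Union>j\<in>{1..3}. V j l0')"
    proof -
      have "r j \<in> V j l0'" by (rule V_center[OF that(1)])
      then have "r j \<in> (\<Union>j\<in>{1..3}. V j l0')" using that(1) by (rule UN_I[rotated])
      then show ?thesis by (rule subsetD[OF closure_subset])
    qed
    have c2: "closure (\<Union>j\<in>{1..3}. V j l0') \<subseteq> (poly q ^^ (l0' * m1)) ` V k l0'"
      using Ve(3)[rule_format, OF order_refl that(2)] by (elim conjE)
    have c3: "(poly q ^^ (l0' * m1)) ` V k l0' = V k 0" using bijl[OF that(2)] by (simp add: bij_betw_def)
    show ?thesis using c1 c2 c3 by blast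
  qed
  have "\<forall>x\<in>{1..3}\<times>{1..3}. \<exists>e>0. cball (r (fst x)) e \<subseteq> V (snd x) 0"
  proof
    fix x :: "nat \<times> nat" assume x: "x \<in> {1..3}\<times>{1..3}"
    then obtain j k where jk: "x = (j,k)" "j \<in> {1..3}" "k \<in> {1..3}" by (rule SigmaE) 
    have "r j \<in> V k 0" by (rule rin[OF jk(2,3)])
    moreover have "open (V k 0)" by (rule V_open[OF jk(3)])
    ultimately have "\<exists>e>0. cball (r j) e \<subseteq> V k 0"
      by (simp add: open_contains_cball)
    then show "\<exists>e>0. cball (r (fst x)) e \<subseteq> V (snd x) 0" by (simp add: jk(1))
  qed
  then obtain ef where ef0: "\<forall>x\<in>{1..3}\<times>{1..3}. ef x > 0 \<and> cball (r (fst x)) (ef x) \<subseteq> V (snd x) 0"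
    by (rule bchoice[THEN exE])
  have ef: "ef x > 0 \<and> cball (r (fst x)) (ef x) \<subseteq> V (snd x) 0" if "x \<in> {1..3}\<times>{1..3}" for x
    by (rule bspec[OF ef0 that])
  define R where "R = Min (ef ` ({1..3}\<times>{1..3})) / 2"
  have Rpos: "R > 0"
  proof -
    have "0 < Min (ef ` ({1..3}\<times>{1..3}))"
    proof (subst Min_gr_iff)
      show "finite (ef ` ({1..3::nat}\<times>{1..3::nat}))" by simp
      show "ef ` ({1..3}\<times>{1..3}) \<noteq> {}" by simp
      show "\<forall>a\<in>ef ` ({1..3}\<times>{1..3}). 0 < a" using ef by (simp add: image_iff)
    qed
    then show ?thesis unfolding R_def by simp
  qed
  have balls: "\<forall>j\<in>{1..3}. cball (r j) (2*R) \<subseteq> V k 0" if "k \<in> {1..3}" for k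
  proof
    fix j :: nat assume j: "j \<in> {1..3}"
    have jk: "(j,k) \<in> {1..3}\<times>{1..3}" using j that by (rule SigmaI)
    have "Min (ef ` ({1..3}\<times>{1..3})) \<le> ef (j,k)"
      by (rule Min_le) (use jk in simp_all)
    then have "2*R \<le> ef (j,k)" unfolding R_def by simp
    then have "cball (r j) (2*R) \<subseteq> cball (r j) (ef (j,k))" by (rule subset_cball)
    also have "\<dots> \<subseteq> V k 0" using conjunct2[OF ef[OF jk]] by simp
    finally show "cball (r j) (2*R) \<subseteq> V k 0" .
  qed
  obtain e where e: "e > 0" "\<And>x. x \<in> K \<Longrightarrow> \<exists>G\<in>H ` {1..3}. ball x e \<subseteq> G"
    using Heine_Borel_lemma[OF K_compact K_sub] H_open by blast
  have leb: "\<forall>p\<in>K. \<exists>j\<in>{1..3}. ball p e \<subseteq> H j" using e(2) by blast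
  have "\<forall>x\<in>{1..3}\<times>{1..3}. \<exists>L\<ge>0. \<forall>A M. A holomorphic_on V (fst x) 0 \<longrightarrow>
      (\<forall>z\<in>V (fst x) 0. norm (deriv A z) \<le> M) \<longrightarrow> norm (A (r (snd x)) - A (r 1)) \<le> M * L"
  proof
    fix x :: "nat \<times> nat" assume x: "x \<in> {1..3}\<times>{1..3}"
    show "\<exists>L\<ge>0. \<forall>A M. A holomorphic_on V (fst x) 0 \<longrightarrow>
      (\<forall>z\<in>V (fst x) 0. norm (deriv A z) \<le> M) \<longrightarrow> norm (A (r (snd x)) - A (r 1)) \<le> M * L"
    proof -
      obtain k j where kj: "x = (k,j)" "k \<in> {1..3}" "j \<in> {1..3}" using x by (rule SigmaE)
      have one: "(1::nat) \<in> {1..3}" by simp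
      show ?thesis unfolding kj(1) fst_conv snd_conv
        by (rule path_bound[OF V_open[OF kj(2)] V_connected[OF kj(2)] rin[OF one kj(2)] rin[OF kj(3) kj(2)]])
    qed
  qed
  then obtain Lf where Lf0: "\<forall>x\<in>{1..3}\<times>{1..3}. Lf x \<ge> 0 \<and> (\<forall>A M. A holomorphic_on V (fst x) 0 \<longrightarrow>
      (\<forall>z\<in>V (fst x) 0. norm (deriv A z) \<le> M) \<longrightarrow> norm (A (r (snd x)) - A (r 1)) \<le> M * Lf x)"
    by (rule bchoice[THEN exE])
  have Lf: "Lf x \<ge> 0 \<and> (\<forall>A M. A holomorphic_on V (fst x) 0 \<longrightarrow>
      (\<forall>z\<in>V (fst x) 0. norm (deriv A z) \<le> M) \<longrightarrow> norm (A (r (snd x)) - A (r 1)) \<le> M * Lf x)"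
    if "x \<in> {1..3}\<times>{1..3}" for x
    by (rule bspec[OF Lf0 that])
  define L0 where "L0 = (\<Sum>x\<in>{1..3}\<times>{1..3}. Lf x)"
  have L0pos: "L0 \<ge> 0" unfolding L0_def
    by (rule sum_nonneg) (rule conjunct1[OF Lf])
  have Lp: "\<forall>A M. A holomorphic_on V k 0 \<longrightarrow> (\<forall>z\<in>V k 0. norm (deriv A z) \<le> M)
               \<longrightarrow> (\<forall>j\<in>{1..3}. norm (A (r j) - A (r 1)) \<le> M * L0)" if k: "k \<in> {1..3}" for k
  proof (intro allI impI ballI)
    fix A :: "complex \<Rightarrow> complex" and M :: real and j :: nat assume A: "A holomorphic_on V k 0" and M: "\<forall>z\<in>V k 0. norm (deriv A z) \<le> M"
      and j: "j \<in> {1..3}"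
    have kj: "(k,j) \<in> {1..3}\<times>{1..3}" using k j by (rule SigmaI)
    have r1k: "r 1 \<in> V k 0" using rin[OF _ k, of 1] by simp
    have "norm (deriv A (r 1)) \<le> M" using M r1k by blast
    then have M0: "M \<ge> 0" using norm_ge_zero[of "deriv A (r 1)"] by linarith
    have "norm (A (r j) - A (r 1)) \<le> M * Lf (k,j)"
    proof -
      have "\<forall>A M. A holomorphic_on V k 0 \<longrightarrow>
        (\<forall>z\<in>V k 0. norm (deriv A z) \<le> M) \<longrightarrow> norm (A (r j) - A (r 1)) \<le> M * Lf (k,j)"
        using conjunct2[OF Lf[OF kj]] by simp
      then show ?thesis using A M by blast
    qed
    also have "\<dots> \<le> M * L0" unfolding L0_def
    proof (rule mult_left_mono[OF _ M0])
      show "Lf (k, j) \<le> (\<Sum>x\<in>{1..3}\<times>{1..3}. Lf x)"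
        by (rule member_le_sum[OF kj]) (auto intro: conjunct1[OF Lf])
    qed
    finally show "norm (A (r j) - A (r 1)) \<le> M * L0" .
  qed
  have "(\<lambda>n. \<bar>C\<bar> * \<theta> ^ n) \<longlonglongrightarrow> \<bar>C\<bar> * 0"
    by (intro tendsto_mult tendsto_const LIMSEQ_power_zero) (use Vd in auto)
  then have "eventually (\<lambda>n. \<bar>C\<bar> * \<theta> ^ n < R) sequentially"
    using Rpos by (intro order_tendstoD(2)) auto
  then obtain l1 where l1: "\<And>n. n \<ge> l1 \<Longrightarrow> \<bar>C\<bar> * \<theta> ^ n < R"
    unfolding eventually_sequentially by blast
  have Vsmall: "\<forall>j\<in>{1..3}. V j l \<subseteq> ball (r j) R" if "l \<ge> l1" for l
  proof (intro ballI subsetI)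
    fix j :: nat and w assume j: "j \<in> {1..3}" and w: "w \<in> V j l"
    have "dist (r j) w \<le> diameter (V j l)"
      by (rule diameter_bounded_bound[OF V_bounded[OF j] V_center[OF j] w])
    also have "\<dots> \<le> C * \<theta> ^ l" using Vd(3) j by blast
    also have "\<dots> \<le> \<bar>C\<bar> * \<theta> ^ l" using Vd(1) by (intro mult_right_mono) auto
    also have "\<dots> < R" using l1 that by blast
    finally show "w \<in> ball (r j) R" by simp
  qed
  define \<delta>0 where "\<delta>0 = min 1 (e / (2 * (2*R + L0 + 1)))"
  have d0: "\<delta>0 > 0" "\<delta>0 \<le> 1" "\<delta>0 * (2*R + L0) < e/2"
  proof -
    show "\<delta>0 > 0" "\<delta>0 \<le> 1" using e Rpos L0pos by (auto simp: \<delta>0_def)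
    have "\<delta>0 \<le> e / (2 * (2*R + L0 + 1))" by (simp add: \<delta>0_def)
    then have "\<delta>0 * (2 * (2*R + L0 + 1)) \<le> e" using Rpos L0pos by (simp add: field_simps)
    then show "\<delta>0 * (2*R + L0) < e/2" using \<open>\<delta>0 > 0\<close> by (simp add: algebra_simps)
  qed
  define l0 where "l0 = max l0' l1"
  have l0ge: "1 \<le> l0" using Ve(2) by (simp add: l0_def)
  show ?thesis
  proof (rule exI[of _ \<delta>0], rule conjI[OF d0(1)], rule exI[of _ l0], rule conjI[OF l0ge], intro allI impI)
    fix l :: nat and g :: "complex \<times> complex \<Rightarrow> complex \<times> complex"
    assume l: "l0 \<le> l" and G: "holomorphic2_on g (\<Union>i\<in>{1..3}. H i \<times> V i l)
       \<and> (\<forall>x\<in>(\<Union>i\<in>{1..3}. H i \<times> V i l). fst (g x) \<in> K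
                \<and> snd (g x) = (poly q ^^ (l * m1)) (snd x))
       \<and> contracts_cone g (\<Union>i\<in>{1..3}. H i \<times> V i l) \<delta>0"
    define Z where "Z = (\<Union>i\<in>{1..3}. H i \<times> V i l)"
    have Gh: "holomorphic2_on g Z \<and> (\<forall>x\<in>Z. fst (g x) \<in> K \<and> snd (g x) = (poly q ^^ (l * m1)) (snd x))
       \<and> contracts_cone g Z \<delta>0" unfolding Z_def by (rule G)
    obtain \<delta>' where dl: "0 < \<delta>'" "\<delta>' < \<delta>0"
      "\<forall>x\<in>Z. \<forall>v\<in>cone \<delta>0. frechet_derivative g (at x) v \<in> cone \<delta>'"
      using Gh unfolding contracts_cone_def by blast
    define \<alpha> where "\<alpha> = min (1/4) (min ((\<delta>0-\<delta>')/8) (min (R/2) (e/4)))"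
    have al: "0 < \<alpha>" "\<alpha> \<le> 1/4" "8*\<alpha> \<le> \<delta>0 - \<delta>'" "\<alpha> < R" "\<delta>0 * (2*R + L0) + \<alpha> < e"
    proof -
      show "0 < \<alpha>" using dl Rpos e(1) by (simp add: \<alpha>_def)
      show "\<alpha> \<le> 1/4" by (simp add: \<alpha>_def)
      have "\<alpha> \<le> (\<delta>0 - \<delta>')/8" unfolding \<alpha>_def by linarith
      then show "8*\<alpha> \<le> \<delta>0 - \<delta>'" by (simp add: field_simps)
      show "\<alpha> < R" using Rpos by (simp add: \<alpha>_def)
      have "\<alpha> \<le> e/4" unfolding \<alpha>_def by linarith
      then show "\<delta>0 * (2*R + L0) + \<alpha> < e" using d0(3) e(1) by linarith
    qed
    have lge: "l0' \<le> l" "l1 \<le> l" using l by (simp_all add: l0_def)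
    have Zo: "open Z" unfolding Z_def
      by (intro open_UN ballI open_Times H_open V_open) auto
    have subZ: "H k \<times> V k l \<subseteq> Z" if "k \<in> {1..3}" for k
      unfolding Z_def using that by blast
    have Vso: "\<forall>j\<in>{1..3}. open (V j l)" using V_open by blast
    have Qd1: "\<forall>u\<in>V k l. 1 \<le> norm (deriv (poly q ^^ (l * m1)) u)" if k: "k \<in> {1..3}" for k
    proof
      fix u assume u: "u \<in> V k l"
      have E: "(\<forall>w\<in>V k l. Aexp * cmod (deriv (poly q ^^ m1) (r k)) ^ l
                        \<le> cmod (deriv (poly q ^^ (l * m1)) w)) \<and>
          Aexp * cmod (deriv (poly q ^^ m1) (r k)) ^ l > 1"
        using Ve(3)[rule_format, OF lge(1) k] by (elim conjE) (rule conjI)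
      then show "1 \<le> norm (deriv (poly q ^^ (l * m1)) u)" using u by force
    qed
    have Qd2: "\<forall>u. ((poly q ^^ (l * m1)) has_field_derivative deriv (poly q ^^ (l * m1)) u) (at u)"
      using holomorphic_derivI[OF funpow_poly_holo open_UNIV UNIV_I] by blast
    have "\<forall>k\<in>{1..3}. \<exists>\<psi>. \<psi> holomorphic_on V k 0 \<and> \<psi> ` V k 0 \<subseteq> V k l
        \<and> (\<forall>y\<in>V k 0. (poly q ^^ (l * m1)) (\<psi> y) = y)
        \<and> (\<forall>y\<in>V k 0. deriv (poly q ^^ (l * m1)) (\<psi> y) * deriv \<psi> y = 1)"
    proof
      fix k :: nat assume k: "k \<in> {1..3}"
      have bj: "bij_betw (poly q ^^ (l * m1)) (V k l) (V k 0)" by (rule bijl[OF k])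
      then have inj: "inj_on (poly q ^^ (l * m1)) (V k l)" and img: "(poly q ^^ (l * m1)) ` V k l = V k 0"
        by (simp_all add: bij_betw_def)
      obtain \<psi> where \<psi>: "\<psi> holomorphic_on ((poly q ^^ (l * m1)) ` V k l)"
        "\<And>z. z \<in> V k l \<Longrightarrow> deriv (poly q ^^ (l * m1)) z * deriv \<psi> ((poly q ^^ (l * m1)) z) = 1"
        "\<And>z. z \<in> V k l \<Longrightarrow> \<psi> ((poly q ^^ (l * m1)) z) = z"
        using holomorphic_has_inverse[OF funpow_poly_holo V_open[OF k] inj] by blast
      show "\<exists>\<psi>. \<psi> holomorphic_on V k 0 \<and> \<psi> ` V k 0 \<subseteq> V k l
        \<and> (\<forall>y\<in>V k 0. (poly q ^^ (l * m1)) (\<psi> y) = y)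
        \<and> (\<forall>y\<in>V k 0. deriv (poly q ^^ (l * m1)) (\<psi> y) * deriv \<psi> y = 1)"
      proof (intro exI[of _ \<psi>] conjI ballI subsetI)
        show "\<psi> holomorphic_on V k 0" using \<psi>(1) img by simp
        fix y assume "y \<in> V k 0"
        then obtain u where u: "u \<in> V k l" "y = (poly q ^^ (l * m1)) u" using img by blast
        show "(poly q ^^ (l * m1)) (\<psi> y) = y" using u \<psi>(3) by simp
        show "deriv (poly q ^^ (l * m1)) (\<psi> y) * deriv \<psi> y = 1" using u \<psi>(2,3) by simp
      next
        fix x assume "x \<in> \<psi> ` V k 0"
        then obtain y where y: "y \<in> V k 0" "x = \<psi> y" by blast
        then obtain u where u: "u \<in> V k l" "y = (poly q ^^ (l * m1)) u" using img by blast
        show "x \<in> V k l" using u y \<psi>(3) by simp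
      qed
    qed
    then obtain \<psi> where \<psi>0: "\<forall>k\<in>{1..3}. \<psi> k holomorphic_on V k 0 \<and> \<psi> k ` V k 0 \<subseteq> V k l
        \<and> (\<forall>y\<in>V k 0. (poly q ^^ (l * m1)) (\<psi> k y) = y)
        \<and> (\<forall>y\<in>V k 0. deriv (poly q ^^ (l * m1)) (\<psi> k y) * deriv (\<psi> k) y = 1)"
      by (rule bchoice[THEN exE])
    have \<psi>: "\<psi> k holomorphic_on V k 0" "\<psi> k ` V k 0 \<subseteq> V k l"
        "\<forall>y\<in>V k 0. (poly q ^^ (l * m1)) (\<psi> k y) = y"
        "\<forall>y\<in>V k 0. deriv (poly q ^^ (l * m1)) (\<psi> k y) * deriv (\<psi> k) y = 1"
      if "k \<in> {1..3}" for k
      using bspec[OF \<psi>0 that] by blast+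
    show "\<exists>\<alpha>>0. \<forall>f :: complex \<times> complex \<Rightarrow> complex \<times> complex.
              \<forall>i\<in>{1..3}. \<forall>\<sigma> :: complex \<Rightarrow> complex.
                holomorphic2_on f (\<Union>i\<in>{1..3}. H i \<times> V i l)
                \<and> C1_close (\<Union>i\<in>{1..3}. H i \<times> V i l) f g \<alpha>
                \<and> \<sigma> holomorphic_on V i l \<and> \<sigma> ` V i l \<subseteq> H i
                \<and> (\<exists>c < \<delta>0. \<forall>w\<in>V i l. cmod (deriv \<sigma> w) \<le> c)
                \<longrightarrow> Lambda_set f (\<Union>i\<in>{1..3}. H i \<times> V i l)
                      \<inter> {(\<sigma> w, w) | w. w \<in> V i l} \<noteq> {}"
      unfolding Z_def[symmetric]
    proof (intro exI[of _ \<alpha>] conjI al(1) allI ballI impI)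
      fix f :: "complex \<times> complex \<Rightarrow> complex \<times> complex" and i :: nat and \<sigma> :: "complex \<Rightarrow> complex"
      assume i: "i \<in> {1..3}" and Fh: "holomorphic2_on f Z \<and> C1_close Z f g \<alpha>
                \<and> \<sigma> holomorphic_on V i l \<and> \<sigma> ` V i l \<subseteq> H i
                \<and> (\<exists>c < \<delta>0. \<forall>w\<in>V i l. cmod (deriv \<sigma> w) \<le> c)"
      have fh: "holomorphic2_on f Z" and cl: "C1_close Z f g \<alpha>"
        and \<sigma>h: "\<sigma> holomorphic_on V i l" "\<sigma> ` V i l \<subseteq> H i"
        and \<sigma>d: "\<exists>c < \<delta>0. \<forall>w\<in>V i l. cmod (deriv \<sigma> w) \<le> c"
        using Fh by blast+
      define Good where "Good p \<longleftrightarrow> fst p \<in> {1..3} \<and> snd p holomorphic_on V (fst p) l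
          \<and> snd p ` V (fst p) l \<subseteq> H (fst p) \<and> (\<forall>u\<in>V (fst p) l. norm (deriv (snd p) u) < \<delta>0)"
        for p :: "nat \<times> (complex \<Rightarrow> complex)"
      define Cov where "Cov p p' \<longleftrightarrow> (\<forall>u'\<in>V (fst p') l. \<exists>u\<in>\<psi> (fst p) ` cball (r (fst p')) (R+\<alpha>).
           f (snd p u, u) = (snd p' u', u'))"
        for p p' :: "nat \<times> (complex \<Rightarrow> complex)"
      have stepex: "\<exists>p'. Good p' \<and> Cov p p'" if gp: "Good p" for p
      proof -
        obtain k s where p: "p = (k,s)" by (cases p)
        have k: "k \<in> {1..3}" and sh: "s holomorphic_on V k l" "s ` V k l \<subseteq> H k"
          "\<forall>u\<in>V k l. norm (deriv s u) < \<delta>0" using gp by (simp_all add: Good_def p)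
        have "\<exists>j\<in>{1..3}. \<exists>s'. s' holomorphic_on V j l \<and> s' ` V j l \<subseteq> H j
           \<and> (\<forall>u\<in>V j l. norm (deriv s' u) < \<delta>0)
           \<and> (\<forall>u'\<in>V j l. \<exists>u\<in>\<psi> k ` cball (r j) (R+\<alpha>). f (s u, u) = (s' u', u'))"
          using step[where Q="poly q ^^ (l * m1)" and \<psi>="\<psi> k" and s=s and Hs=H and Vs="\<lambda>j. V j l"
              and VO="V k 0" and Z=Z and k=k and f=f and g=g and K=K and r=r and R=R and LO=L0
              and e=e and \<delta>o=\<delta>0 and \<delta>'=\<delta>' and \<alpha>=\<alpha>,
              OF Zo V_open[OF k] V_open[OF k] Vso \<psi>[OF k] Qd1[OF k] Qd2 sh subZ[OF k] fh
                 conjunct1[OF Gh] conjunct1[OF conjunct2[OF Gh]] dl(3) cl balls[OF k] Lp[OF k] leb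
                 Vsmall[OF lge(2)] dl(1) dl(2) d0(2) al]
          by simp
        then obtain j s' where j: "j \<in> {1..3}" and s': "s' holomorphic_on V j l" "s' ` V j l \<subseteq> H j"
           "\<forall>u\<in>V j l. norm (deriv s' u) < \<delta>0"
           "\<forall>u'\<in>V j l. \<exists>u\<in>\<psi> k ` cball (r j) (R+\<alpha>). f (s u, u) = (s' u', u')" by blast
        show ?thesis
        proof (rule exI[of _ "(j,s')"], rule conjI)
          show "Good (j,s')" unfolding Good_def fst_conv snd_conv using j s'(1-3) by blast
          show "Cov p (j,s')" unfolding Cov_def p fst_conv snd_conv by (rule s'(4))
        qed
      qed
      define seq :: "nat \<Rightarrow> nat \<times> (complex \<Rightarrow> complex)"
        where "seq n = rec_nat (i, \<sigma>) (\<lambda>_ p. SOME p'. Good p' \<and> Cov p p') n" for n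
      have seq0: "seq 0 = (i, \<sigma>)" by (simp add: seq_def)
      have seqS: "seq (Suc n) = (SOME p'. Good p' \<and> Cov (seq n) p')" for n by (simp add: seq_def)
      have good0: "Good (i, \<sigma>)"
      proof -
        obtain c where c: "c < \<delta>0" "\<forall>w\<in>V i l. cmod (deriv \<sigma> w) \<le> c" using \<sigma>d by blast
        have "\<forall>u\<in>V i l. norm (deriv \<sigma> u) < \<delta>0" using c by force
        then show ?thesis using i \<sigma>h by (simp add: Good_def)
      qed
      have goodn: "Good (seq n)" for n
      proof (induction n)
        case 0 show ?case using good0 seq0 by simp
      next
        case (Suc n)
        have "Good (SOME p'. Good p' \<and> Cov (seq n) p') \<and> Cov (seq n) (SOME p'. Good p' \<and> Cov (seq n) p')"
          by (rule someI_ex[OF stepex[OF Suc.IH]])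
        then show ?case unfolding seqS by blast
      qed
      have goodcov: "Good (seq n) \<and> Cov (seq n) (seq (Suc n))" for n
      proof -
        have "Good (SOME p'. Good p' \<and> Cov (seq n) p') \<and> Cov (seq n) (SOME p'. Good p' \<and> Cov (seq n) p')"
          by (rule someI_ex[OF stepex[OF goodn]])
        then show ?thesis unfolding seqS using goodn by blast
      qed
      define kk where "kk n = fst (seq n)" for n
      define ss where "ss n = snd (seq n)" for n
      have kkr: "kk n \<in> {1..3}" and ssh: "ss n holomorphic_on V (kk n) l"
        and ssH: "ss n ` V (kk n) l \<subseteq> H (kk n)" for n
        using goodcov[of n] by (simp_all add: Good_def kk_def ss_def)
      have cov: "\<forall>u'\<in>V (kk (Suc n)) l. \<exists>u\<in>\<psi> (kk n) ` cball (r (kk (Suc n))) (R+\<alpha>).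
           f (ss n u, u) = (ss (Suc n) u', u')" for n
        using goodcov[of n] by (simp add: Cov_def kk_def ss_def)
      have kk0: "kk 0 = i" and ss0: "ss 0 = \<sigma>" by (simp_all add: kk_def ss_def seq0)
      define M where "M n = \<psi> (kk n) ` cball (r (kk (Suc n))) (R+\<alpha>)" for n
      have cbV: "cball (r (kk (Suc n))) (R+\<alpha>) \<subseteq> V (kk n) 0" for n
      proof -
        have "cball (r (kk (Suc n))) (R+\<alpha>) \<subseteq> cball (r (kk (Suc n))) (2*R)"
          using al(4) by (intro subset_cball) simp
        also have "\<dots> \<subseteq> V (kk n) 0" using balls[OF kkr[of n]] kkr[of "Suc n"] by blast
        finally show ?thesis .
      qed
      have MV: "M n \<subseteq> V (kk n) l" for n
        using cbV[of n] \<psi>(2)[OF kkr[of n]] unfolding M_def by blast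
      have Mc: "compact (M n)" for n
        unfolding M_def
        by (rule compact_continuous_image[OF continuous_on_subset[OF
              holomorphic_on_imp_continuous_on[OF \<psi>(1)[OF kkr[of n]]] cbV] compact_cball])
      have Mne: "M n \<noteq> {}" for n
        unfolding M_def using al(1,4) Rpos by simp
      define \<Gamma> where "\<Gamma> n = (\<lambda>u. (ss n u, u)) ` M n" for n
      have \<Gamma>c: "compact (\<Gamma> n)" for n
      proof -
        have "continuous_on (M n) (\<lambda>u. (ss n u, u))"
          by (intro continuous_intros continuous_on_subset[OF holomorphic_on_imp_continuous_on[OF ssh] MV])
        then show ?thesis unfolding \<Gamma>_def by (rule compact_continuous_image[OF _ Mc])
      qed
      have \<Gamma>Z: "\<Gamma> n \<subseteq> Z" for n
      proof
        fix x assume "x \<in> \<Gamma> n"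
        then obtain u where u: "u \<in> M n" "x = (ss n u, u)" by (auto simp: \<Gamma>_def)
        have "x \<in> H (kk n) \<times> V (kk n) l" using u MV ssH by blast
        then show "x \<in> Z" using subZ[OF kkr] by blast
      qed
      have fcont: "continuous_on Z f"
      proof (rule continuous_at_imp_continuous_on, rule ballI)
        fix x assume "x \<in> Z"
        then obtain D where "(f has_derivative D) (at x)" using fh unfolding holomorphic2_on_def by blast
        then show "isCont f x" by (rule has_derivative_continuous)
      qed
      define F where "F n = {w \<in> M 0. \<forall>t\<le>n. (f ^^ t) (\<sigma> w, w) \<in> \<Gamma> t}" for n
      have Fne: "\<forall>u\<in>M n. \<exists>w\<in>M 0. (\<forall>t\<le>n. (f ^^ t) (\<sigma> w, w) \<in> \<Gamma> t) \<and> (f ^^ n) (\<sigma> w, w) = (ss n u, u)" for n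
      proof (induction n)
        case 0
        show ?case
        proof
          fix u assume u: "u \<in> M 0"
          have "(\<sigma> u, u) \<in> \<Gamma> 0" using u ss0 by (auto simp: \<Gamma>_def)
          then show "\<exists>w\<in>M 0. (\<forall>t\<le>0. (f ^^ t) (\<sigma> w, w) \<in> \<Gamma> t) \<and> (f ^^ 0) (\<sigma> w, w) = (ss 0 u, u)"
            using u ss0 by (intro bexI[of _ u]) auto
        qed
      next
        case (Suc n)
        show ?case
        proof
          fix u assume u: "u \<in> M (Suc n)"
          then have uV: "u \<in> V (kk (Suc n)) l" using MV by blast
          obtain u0 where u0: "u0 \<in> M n" "f (ss n u0, u0) = (ss (Suc n) u, u)"
            using cov[of n] uV unfolding M_def by blast
          obtain w where w: "w \<in> M 0" "\<forall>t\<le>n. (f ^^ t) (\<sigma> w, w) \<in> \<Gamma> t" "(f ^^ n) (\<sigma> w, w) = (ss n u0, u0)"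
            using Suc.IH u0(1) by blast
          have last: "(f ^^ Suc n) (\<sigma> w, w) = (ss (Suc n) u, u)" using w(3) u0(2) by simp
          have "(ss (Suc n) u, u) \<in> \<Gamma> (Suc n)" using u by (auto simp: \<Gamma>_def)
          then have "\<forall>t\<le>Suc n. (f ^^ t) (\<sigma> w, w) \<in> \<Gamma> t" using w(2) last by (auto simp: le_Suc_eq)
          then show "\<exists>w\<in>M 0. (\<forall>t\<le>Suc n. (f ^^ t) (\<sigma> w, w) \<in> \<Gamma> t) \<and> (f ^^ Suc n) (\<sigma> w, w) = (ss (Suc n) u, u)"
            using w(1) last by blast
        qed
      qed
      have Fne2: "F n \<noteq> {}" for n
      proof -
        obtain u where "u \<in> M n" using Mne by blast
        then obtain w where "w \<in> M 0" "\<forall>t\<le>n. (f ^^ t) (\<sigma> w, w) \<in> \<Gamma> t" using Fne by blast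
        then show ?thesis by (auto simp: F_def)
      qed
      have Fcl: "closed (F n) \<and> continuous_on (F n) (\<lambda>w. (f ^^ n) (\<sigma> w, w))" for n
      proof (induction n)
        case 0
        have "F 0 = M 0" using ss0 by (auto simp: F_def \<Gamma>_def)
        moreover have "continuous_on (M 0) (\<lambda>w. (f ^^ 0) (\<sigma> w, w))"
        proof -
          have "continuous_on (M 0) \<sigma>"
            using continuous_on_subset[OF holomorphic_on_imp_continuous_on[OF \<sigma>h(1)]] MV[of 0] kk0 by simp
          then show ?thesis by (simp add: continuous_on_Pair continuous_on_id)
        qed
        ultimately show ?case using compact_imp_closed[OF Mc] by simp
      next
        case (Suc n)
        have img: "(\<lambda>w. (f ^^ n) (\<sigma> w, w)) ` F n \<subseteq> Z"
          using \<Gamma>Z by (fastforce simp: F_def)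
        have c1: "continuous_on (F n) (\<lambda>w. f ((f ^^ n) (\<sigma> w, w)))"
          by (rule continuous_on_compose2[OF fcont conjunct2[OF Suc.IH] img])
        have eq: "F (Suc n) = F n \<inter> (\<lambda>w. f ((f ^^ n) (\<sigma> w, w))) -` \<Gamma> (Suc n)"
          by (auto simp: F_def le_Suc_eq)
        have "closed (F (Suc n))"
          unfolding eq by (rule continuous_closed_preimage[OF c1 conjunct1[OF Suc.IH] compact_imp_closed[OF \<Gamma>c]])
        moreover have "continuous_on (F (Suc n)) (\<lambda>w. (f ^^ Suc n) (\<sigma> w, w))"
          using continuous_on_subset[OF c1] eq by simp
        ultimately show ?case by simp
      qed
      have Fc: "compact (F n)" for n
      proof -
        have "F n = M 0 \<inter> F n" by (auto simp: F_def)
        then show ?thesis using compact_Int_closed[OF Mc conjunct1[OF Fcl]] by metis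
      qed
      have Fmono: "F n \<subseteq> F m" if "m \<le> n" for m n
        using that by (auto simp: F_def)
      have "\<Inter>(range F) \<noteq> {}" by (rule compact_nest[OF Fc Fne2 Fmono])
      then obtain w where w: "\<And>n. w \<in> F n" by blast
      have wM: "w \<in> M 0" using w[of 0] by (simp add: F_def)
      have orb: "(f ^^ t) (\<sigma> w, w) \<in> Z" for t
        using w[of t] \<Gamma>Z by (auto simp: F_def)
      have "(\<sigma> w, w) \<in> iter_preimage f Z n (closure Z)" for n
        by (rule iter_pre_mem[OF orb closure_subset])
      then have "(\<sigma> w, w) \<in> Lambda_set f Z" by (simp add: Lambda_set_def)
      moreover have "(\<sigma> w, w) \<in> {(\<sigma> w, w) |w. w \<in> V i l}" using wM MV[of 0] kk0 by blast
      ultimately show "Lambda_set f Z \<inter> {(\<sigma> w, w) |w. w \<in> V i l} \<noteq> {}" by blast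
    qed
  qed
qed

end
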